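(* Let $X$ be a $T_1$ space and $\mathcal{P}$ an ideal of closed subsets of $X$ containing every singleton subset of $X$. The following are equivalent: (1) $C(X)=C(X)_\mathcal{P}$; (2) $X$ is discrete; (3) $C(X)_\mathcal{P}$ is a ring of quotients of $C(X)$.
   Context: An ideal of closed subsets of $X$ is a family $\mathcal{P}$ of closed subsets closed under finite unions and under passing to closed subsets. $D_f$ is the set of discontinuity points of $f\in\mathbb{R}^X$; $C(X)_\mathcal{P}=\{f\in\mathbb{R}^X\colon\overline{D_f}\in\mathcal{P}\}$; $C(X)$ is the ring of continuous real-valued functions on $X$. A ring $S$ containing a reduced ring $R$ is a ring of quotients of $R$ if for each $s\in S\setminus\{0\}$ there is $r\in R$ with $sr\in R\setminus\{0\}$. *)

theory Defs
  imports "HOL-Analysis.Analysis" "HOL-Library.FuncSet"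
begin

text \<open>Real-valued functions on X are represented extensionally: elements of
  the extensional function space PiE (topspace X) UNIV (value undefined outside the space).\<close>

definition ideal_closed :: "'a topology \<Rightarrow> 'a set set \<Rightarrow> bool" where
  "ideal_closed X P \<longleftrightarrow>
     (\<forall>A\<in>P. closedin X A) \<and> {} \<in> P \<and>
     (\<forall>A\<in>P. \<forall>B\<in>P. A \<union> B \<in> P) \<and>
     (\<forall>A\<in>P. \<forall>B. closedin X B \<and> B \<subseteq> A \<longrightarrow> B \<in> P)"

definition discont_points :: "'a topology \<Rightarrow> ('a \<Rightarrow> real) \<Rightarrow> 'a set" where
  "discont_points X f = {x \<in> topspace X. \<not> limitin euclideanreal f (f x) (atin X x)}"

definition Cont :: "'a topology \<Rightarrow> ('a \<Rightarrow> real) set" where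
  "Cont X = {f \<in> topspace X \<rightarrow>\<^sub>E UNIV. continuous_map X euclideanreal f}"

definition Cont_P :: "'a topology \<Rightarrow> 'a set set \<Rightarrow> ('a \<Rightarrow> real) set" where
  "Cont_P X P = {f \<in> topspace X \<rightarrow>\<^sub>E UNIV. X closure_of (discont_points X f) \<in> P}"

definition fmult :: "'a topology \<Rightarrow> ('a \<Rightarrow> real) \<Rightarrow> ('a \<Rightarrow> real) \<Rightarrow> ('a \<Rightarrow> real)" where
  "fmult X f g = (\<lambda>x\<in>topspace X. f x * g x)"

definition fzero :: "'a topology \<Rightarrow> ('a \<Rightarrow> real)" where
  "fzero X = (\<lambda>x\<in>topspace X. 0)"

definition ring_of_quotients :: "'a topology \<Rightarrow> ('a \<Rightarrow> real) set \<Rightarrow> ('a \<Rightarrow> real) set \<Rightarrow> bool" where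
  "ring_of_quotients X R S \<longleftrightarrow> R \<subseteq> S \<and>
     (\<forall>s\<in>S. s \<noteq> fzero X \<longrightarrow> (\<exists>r\<in>R. fmult X s r \<in> R \<and> fmult X s r \<noteq> fzero X))"

end

theory Submission
  imports Defs
begin

lemma disc_cont:
  "continuous_map X euclideanreal f \<longleftrightarrow> discont_points X f = {}"
  unfolding continuous_map_atin discont_points_def by auto

lemma open_single:
  assumes "continuous_map X euclideanreal f" "{y\<in>topspace X. f y \<noteq> 0} = {x}"
  shows "openin X {x}"
proof -
  have "openin euclideanreal (-{0::real})" by (simp add: open_Compl)
  then have "openin X {y\<in>topspace X. f y \<in> -{0}}"
    using openin_continuous_map_preimage[OF assms(1)] by blast
  then show ?thesis using assms(2) by simp
qed

lemma ind_in_CP: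
  assumes t1: "t1_space X" and id: "ideal_closed X P"
    and sg: "\<forall>x\<in>topspace X. {x} \<in> P" and x: "x \<in> topspace X"
  shows "(\<lambda>y\<in>topspace X. if y = x then 1 else 0) \<in> Cont_P X P"
proof -
  define s where "s = (\<lambda>y\<in>topspace X. if y = x then 1::real else 0)"
  have cx: "closedin X {x}" using closedin_t1_singleton[OF t1 x] .
  have op: "openin X (topspace X - {x})" using cx by blast
  have sub: "discont_points X s \<subseteq> {x}"
  proof
    fix y assume y: "y \<in> discont_points X s"
    show "y \<in> {x}"
    proof (rule ccontr)
      assume "y \<notin> {x}"
      then have yx: "y \<noteq> x" and yt: "y \<in> topspace X" using y by (auto simp: discont_points_def)
      have "limitin euclideanreal s (s y) (atin X y)"
        unfolding limitin_def
      proof (intro conjI allI impI)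
        fix U assume U: "openin euclideanreal U \<and> s y \<in> U"
        show "\<forall>\<^sub>F z in atin X y. s z \<in> U"
          unfolding eventually_atin
          apply (rule disjI2)
          apply (rule exI[of _ "topspace X - {x}"])
          using op yx yt U by (auto simp: s_def)
      qed simp
      then show False using y by (simp add: discont_points_def)
    qed
  qed
  have "X closure_of discont_points X s \<subseteq> {x}"
    using closure_of_mono[OF sub, of X] closure_of_closedin[OF cx] by simp
  moreover have "closedin X (X closure_of discont_points X s)" by simp
  ultimately have "X closure_of discont_points X s \<in> P"
    using id sg x unfolding ideal_closed_def by blast
  then show ?thesis unfolding Cont_P_def s_def[symmetric] by (auto simp: s_def)
qed

theorem proposition5p4:
  fixes X :: "'a topology" and P :: "'a set set"
  assumes "t1_space X"
    and "ideal_closed X P"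
    and "\<forall>x\<in>topspace X. {x} \<in> P"
  shows "(Cont X = Cont_P X P \<longleftrightarrow> X = discrete_topology (topspace X))
       \<and> (X = discrete_topology (topspace X) \<longleftrightarrow> ring_of_quotients X (Cont X) (Cont_P X P))"
proof -
  have empP: "{} \<in> P" using assms(2) unfolding ideal_closed_def by blast
  have A: "Cont X = Cont_P X P" if d: "X = discrete_topology (topspace X)"
  proof -
    have "continuous_map X euclideanreal f" for f
    proof -
      have c: "continuous_map (discrete_topology (topspace X)) euclideanreal f" by simp
      show ?thesis using c by (simp only: d[symmetric])
    qed
    then have "discont_points X f = {}" for f using disc_cont[of X f] by simp
    then show ?thesis unfolding Cont_def Cont_P_def using empP \<open>\<And>f. continuous_map X euclideanreal f\<close> by auto
  qed
  have B: "X = discrete_topology (topspace X)" if h: "\<forall>x\<in>topspace X.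
      \<exists>c. c \<noteq> 0 \<and> (\<lambda>y\<in>topspace X. if y = x then c else 0) \<in> Cont X"
  proof -
    have "openin X {x}" if x: "x \<in> topspace X" for x
    proof -
      obtain c where c: "c \<noteq> 0" "(\<lambda>y\<in>topspace X. if y = x then c else 0) \<in> Cont X"
        using h x by blast
      show ?thesis
        apply (rule open_single[of X "\<lambda>y\<in>topspace X. if y = x then c else 0"])
        using c x by (auto simp: Cont_def)
    qed
    then have "discrete_topology (topspace X) = X" by (simp add: discrete_topology_unique)
    then show ?thesis by simp
  qed
  have C: "X = discrete_topology (topspace X)" if "Cont X = Cont_P X P"
  proof (rule B, intro ballI)
    fix x assume x: "x \<in> topspace X"
    show "\<exists>c. c \<noteq> 0 \<and> (\<lambda>y\<in>topspace X. if y = x then c else 0) \<in> Cont X"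
      apply (rule exI[of _ 1])
      using ind_in_CP[OF assms x] that by simp
  qed
  have D: "ring_of_quotients X (Cont X) (Cont_P X P)" if d: "X = discrete_topology (topspace X)"
  proof -
    have eq: "Cont X = Cont_P X P" using A d by blast
    have one: "(\<lambda>y\<in>topspace X. 1::real) \<in> Cont X"
      by (simp add: Cont_def)
    have "fmult X s (\<lambda>y\<in>topspace X. 1) = s" if "s \<in> Cont X" for s
      using that unfolding fmult_def Cont_def by (auto simp: PiE_def extensional_def)
    then show ?thesis unfolding ring_of_quotients_def eq[symmetric]
      apply (intro conjI subset_refl ballI impI)
      apply (rule bexI[of _ "\<lambda>y\<in>topspace X. 1::real"])
      using one by auto
  qed
  have E: "X = discrete_topology (topspace X)" if r: "ring_of_quotients X (Cont X) (Cont_P X P)"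
  proof (rule B, intro ballI)
    fix x assume x: "x \<in> topspace X"
    define s where "s = (\<lambda>y\<in>topspace X. if y = x then 1::real else 0)"
    have sP: "s \<in> Cont_P X P" using ind_in_CP[OF assms x] by (simp add: s_def)
    have "s x \<noteq> fzero X x" using x by (simp add: s_def fzero_def)
    then have "s \<noteq> fzero X" by force
    then obtain g where g: "g \<in> Cont X" "fmult X s g \<in> Cont X" "fmult X s g \<noteq> fzero X"
      using r sP unfolding ring_of_quotients_def by blast
    have feq: "fmult X s g = (\<lambda>y\<in>topspace X. if y = x then g x else 0)"
      by (auto simp: fmult_def s_def)
    have "g x \<noteq> 0"
    proof
      assume "g x = 0"
      then have "fmult X s g = fzero X" by (auto simp: feq fzero_def)
      then show False using g(3) by simp
    qed
    then show "\<exists>c. c \<noteq> 0 \<and> (\<lambda>y\<in>topspace X. if y = x then c else 0) \<in> Cont X"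
      using g(2) feq \<open>g x \<noteq> 0\<close> by auto
  qed
  show ?thesis using A C D E by blast
qed

end
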